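(* Let $K$ be a semigroup, $(X,\|\cdot\|)$ a seminormed space, and $U_g:X\to X$ a linear map for each $g\in K$ such that $U_gU_h=U_{gh}$ and $\|U_gx\|\ge\|x\|$ for all $g,h\in K$ and $x\in X$. Suppose that $B_{x_0}:=\{U_gx_0:g\in K\}$ is totally bounded in $(X,\|\cdot\|)$ for some $x_0\in X$. Then for each $\varepsilon>0$ the set \[ E:=\{g\in K:\|U_gx_0-x_0\|<\varepsilon\} \] is relatively dense in $K$.
   Context: A set $E\subset K$ is relatively dense in the semigroup $K$ if there exist $r\in\mathbb{N}$ and $g_1,\dots,g_r\in K$ such that $E\cap\{gg_1,\dots,gg_r\}\neq\varnothing$ for all $g\in K$. A set $B$ is totally bounded in a pseudometric space if for every $\varepsilon>0$ there is a finite set $F$ with every point of $B$ at distance $<\varepsilon$ from some point of $F$. *)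

theory Defs
  imports "HOL-Analysis.Analysis"
begin

definition seminorm :: "('a::real_vector \<Rightarrow> real) \<Rightarrow> bool" where
  "seminorm N \<longleftrightarrow> (\<forall>x. N x \<ge> 0) \<and> (\<forall>c x. N (c *\<^sub>R x) = \<bar>c\<bar> * N x)
     \<and> (\<forall>x y. N (x + y) \<le> N x + N y)"

definition totally_bounded_sn :: "('a::real_vector \<Rightarrow> real) \<Rightarrow> 'a set \<Rightarrow> bool" where
  "totally_bounded_sn N B \<longleftrightarrow>
     (\<forall>\<epsilon>>0. \<exists>F. finite F \<and> (\<forall>b\<in>B. \<exists>f\<in>F. N (b - f) < \<epsilon>))"

definition relatively_dense :: "'k::semigroup_mult set \<Rightarrow> bool" where
  "relatively_dense E \<longleftrightarrow>
     (\<exists>r::nat. \<exists>gs :: nat \<Rightarrow> 'k. \<forall>g. E \<inter> {g * gs i | i. i < r} \<noteq> {})"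

end

theory Submission
  imports Defs
begin

definition sepd :: "('a::real_vector \<Rightarrow> real) \<Rightarrow> real \<Rightarrow> 'a set \<Rightarrow> bool" where
  "sepd N e S \<longleftrightarrow> (\<forall>x\<in>S. \<forall>y\<in>S. x \<noteq> y \<longrightarrow> N (x - y) \<ge> e)"

lemma sn_minus:
  assumes "seminorm N" shows "N (x - y) = N (y - x)"
proof -
  have "N ((-1) *\<^sub>R (x - y)) = \<bar>-1\<bar> * N (x - y)" using assms unfolding seminorm_def by blast
  then show ?thesis by simp
qed

lemma sn_tri:
  assumes "seminorm N" shows "N (x - z) \<le> N (x - y) + N (y - z)"
proof -
  have "N ((x - y) + (y - z)) \<le> N (x - y) + N (y - z)" using assms unfolding seminorm_def by blast
  then show ?thesis by simp
qed

lemma sep_card_bound: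
  assumes sn: "seminorm N" and e: "e > 0"
    and F: "finite F" "\<forall>b\<in>B. \<exists>f\<in>F. N (b - f) < e/2"
    and S: "S \<subseteq> B" "sepd N e S"
  shows "finite S \<and> card S \<le> card F"
proof -
  have "\<forall>s\<in>S. \<exists>f\<in>F. N (s - f) < e/2" using F S by blast
  then obtain phi where phi: "\<And>s. s \<in> S \<Longrightarrow> phi s \<in> F \<and> N (s - phi s) < e/2" by metis
  have inj: "inj_on phi S"
  proof (rule inj_onI, rule ccontr)
    fix s t assume st: "s \<in> S" "t \<in> S" "phi s = phi t" "s \<noteq> t"
    have "N (s - t) \<le> N (s - phi s) + N (phi s - t)" by (rule sn_tri[OF sn])
    also have "N (phi s - t) = N (t - phi t)" using st sn_minus[OF sn] by simp
    finally have "N (s - t) < e" using phi[OF st(1)] phi[OF st(2)] by linarith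
    moreover have "N (s - t) \<ge> e" using S st unfolding sepd_def by blast
    ultimately show False by simp
  qed
  have sub: "phi ` S \<subseteq> F" using phi by blast
  then have "finite (phi ` S)" using F finite_subset by blast
  then have fS: "finite S" using inj finite_imageD by blast
  have "card (phi ` S) \<le> card F" using sub F card_mono by blast
  then show ?thesis using fS card_image[OF inj] by simp
qed

theorem proposition5p6:
  fixes N :: "'a::real_vector \<Rightarrow> real"
    and U :: "'k::semigroup_mult \<Rightarrow> 'a \<Rightarrow> 'a"
    and x0 :: 'a and \<epsilon> :: real
  assumes "seminorm N"
    and "\<And>g. linear (U g)"
    and "\<And>g h. U g \<circ> U h = U (g * h)"
    and "\<And>g x. N (U g x) \<ge> N x"
    and "totally_bounded_sn N {U g x0 | g. True}"
    and "\<epsilon> > 0"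
  shows "relatively_dense {g. N (U g x0 - x0) < \<epsilon>}"
proof -
  note sn = assms(1)
  define B where "B = {U g x0 | g. True}"
  have comp: "U g (U h x) = U (g * h) x" for g h x using assms(3) by (metis comp_apply)
  obtain F where F: "finite F" "\<forall>b\<in>B. \<exists>f\<in>F. N (b - f) < \<epsilon>/2"
    using assms(5) assms(6) unfolding totally_bounded_sn_def B_def
    by (metis half_gt_zero)
  define P where "P n = (\<exists>S. S \<subseteq> B \<and> finite S \<and> sepd N \<epsilon> S \<and> card S = n)" for n
  have bnd: "P y \<Longrightarrow> y \<le> card F" for y
    unfolding P_def using sep_card_bound[OF sn assms(6) F] by blast
  have P0: "P 0" unfolding P_def sepd_def by (rule exI[of _ "{}"]) simp
  define m where "m = Greatest P"
  have Pm: "P m" unfolding m_def by (rule GreatestI_nat[of P 0 "card F"]) (use P0 bnd in auto)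
  have mmax: "\<And>y. P y \<Longrightarrow> y \<le> m" unfolding m_def by (rule Greatest_le_nat[of P _ "card F"]) (use bnd in auto)
  obtain S where S: "S \<subseteq> B" "finite S" "sepd N \<epsilon> S" "card S = m" using Pm P_def by blast
  obtain f where f: "bij_betw f {0..<m} S" using ex_bij_betw_nat_finite[OF S(2)] S(4) by blast
  have "\<forall>s\<in>S. \<exists>h. s = U h x0" using S(1) B_def by blast
  then obtain hh where hh: "\<And>s. s \<in> S \<Longrightarrow> s = U (hh s) x0" by metis
  define gs where "gs i = hh (f i)" for i
  have key: "\<exists>s\<in>S. N (U k x0 - U c s) < \<epsilon>" for c k :: 'k
  proof (rule ccontr)
    assume nc: "\<not> (\<exists>s\<in>S. N (U k x0 - U c s) < \<epsilon>)"
    define T where "T = U c ` S"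
    have lin: "U c x - U c y = U c (x - y)" for x y
      using assms(2) by (simp add: linear_diff)
    have sepT: "sepd N \<epsilon> T"
      unfolding sepd_def T_def
    proof (intro ballI impI)
      fix x y assume xy: "x \<in> U c ` S" "y \<in> U c ` S" "x \<noteq> y"
      then obtain s t where st: "s \<in> S" "t \<in> S" "x = U c s" "y = U c t" by blast
      then have "s \<noteq> t" using xy by blast
      then have "N (s - t) \<ge> \<epsilon>" using S(3) st unfolding sepd_def by blast
      then show "N (x - y) \<ge> \<epsilon>" using assms(4)[where g=c and x="s - t"] lin st by (metis order_trans)
    qed
    have injT: "inj_on (U c) S"
    proof (rule inj_onI, rule ccontr)
      fix s t assume st: "s \<in> S" "t \<in> S" "U c s = U c t" "s \<noteq> t"
      then have "N (s - t) \<ge> \<epsilon>" using S(3) unfolding sepd_def by blast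
      moreover have "N (U c (s - t)) = 0"
      proof -
        have "U c (s - t) = 0" using st lin[of s t] by simp
        moreover have "N (0 *\<^sub>R 0) = \<bar>0\<bar> * N 0" using sn unfolding seminorm_def by blast
        ultimately show ?thesis by simp
      qed
      ultimately show False using assms(4)[where g=c and x="s - t"] assms(6) by linarith
    qed
    have TB: "T \<subseteq> B"
    proof
      fix x assume "x \<in> T"
      then obtain s where s: "s \<in> S" "x = U c s" unfolding T_def by blast
      then have "x = U c (U (hh s) x0)" using hh[OF s(1)] by simp
      then have "x = U (c * hh s) x0" using comp by simp
      then show "x \<in> B" unfolding B_def by blast
    qed
    have kB: "U k x0 \<in> B" unfolding B_def by blast
    have kT: "U k x0 \<notin> T"
    proof
      assume "U k x0 \<in> T"
      then obtain s where "s \<in> S" "U k x0 = U c s" unfolding T_def by blast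
      moreover have "N (0 *\<^sub>R 0) = \<bar>0\<bar> * N 0" using sn unfolding seminorm_def by blast
      ultimately show False using nc assms(6) by auto
    qed
    have sep2: "sepd N \<epsilon> (insert (U k x0) T)"
      using sepT nc unfolding sepd_def T_def
      by (auto simp: sn_minus[OF sn])
    have fT: "finite T" using S(2) T_def by simp
    have "P (Suc m)" unfolding P_def
      apply (rule exI[of _ "insert (U k x0) T"])
      using sep2 TB kB fT kT card_image[OF injT] S(4) T_def by auto
    then show False using mmax by fastforce
  qed
  have dense: "\<exists>i<m. N (U (g * gs i) x0 - x0) < \<epsilon>" for g
  proof -
    obtain k :: 'k where True by simp
    obtain s where s: "s \<in> S" "N (U k x0 - U (k * g) s) < \<epsilon>" using key by blast
    obtain i where i: "i < m" "f i = s" using f s(1) unfolding bij_betw_def by auto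
    have "U (k * g) s = U k (U (g * gs i) x0)"
      using hh[OF s(1)] i comp gs_def by (metis mult.assoc)
    moreover have "U k x0 - U k y = U k (x0 - y)" for y using assms(2) by (simp add: linear_diff)
    ultimately have "N (U k (x0 - U (g * gs i) x0)) < \<epsilon>" using s by simp
    then have "N (x0 - U (g * gs i) x0) < \<epsilon>" using assms(4) by (meson le_less_trans)
    then show ?thesis using i sn_minus[OF sn] by metis
  qed
  show ?thesis unfolding relatively_dense_def
  proof (intro exI allI)
    fix g
    from dense[of g] obtain i where "i < m" "N (U (g * gs i) x0 - x0) < \<epsilon>" by blast
    then show "{g. N (U g x0 - x0) < \<epsilon>} \<inter> {g * gs i |i. i < m} \<noteq> {}" by blast
  qed
qed

end
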